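(* For the merging problem with $n=3$ items and $k=2$ slots (with $a_i\ge0$ almost surely and $o_i\ge 0$), the G-FIX mechanism is $(4/5)^3$-approximate: $\mathrm{OBJ}(\mathcal M^F)\ge (4/5)^3\,\mathrm{OBJ}(\mathcal M^* )$, where $\mathcal M^*$ is an optimal mechanism.
   Context: Merging problem: $n$ items indexed by $[n]$, $k\le n$ slots. Each item $i$ has a random ad value $a_i$, drawn independently from a regular distribution $G_i$ ($\boldsymbol a\sim G=\times_i G_i$), and a fixed organic value $o_i\ge0$. A mechanism is a pair of allocation rules $x,y$ with $x_i(\boldsymbol a),y_i(\boldsymbol a)\in\{0,1\}$ ($x_i=1$: item $i$ shown as ad; $y_i=1$: shown organically) satisfying for all $\boldsymbol a,i$: (i) $\sum_i(x_i+y_i)\le k$; (ii) $x_i+y_i\le 1$; (iii) $y_i(a_i,\boldsymbol a_{-i})$ independent of $a_i$; (iv) $x_i(a_i,\boldsymbol a_{-i})$ non-decreasing in $a_i$. Objective $\mathrm{OBJ}=\mathbb E_{\boldsymbol a\sim G}[\sum_i(a_ix_i(\boldsymbol a)+o_iy_i(\boldsymbol a))]$; $\mathcal M^*$ maximizes it subject to (i)–(iv). A mechanism $\mathcal M$ is $\tau$-approximate if $\mathrm{OBJ}(\mathcal M)/\mathrm{OBJ}(\mathcal M^* )\ge\tau$. Notation: for a finite multiset $S$ of reals and $k\le|S|$, $\max^{(k)}S$ is the sum of the $k$ largest elements of $S$. G-FIX-$I$ mechanism $\mathcal M^F_I$ for $I\subseteq[n]$: items in $I$ may only be shown in organic form and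 items outside $I$ only as ads; with $L=\{o_i:i\in I\}\cup\{a_i:i\in[n]\setminus I\}$, it displays (in the designated forms) the $k$ items with the largest values in $L$, i.e. $x_i(\boldsymbol a)=1$ iff $i\notin I$ and $a_i>\max^{(k+1)}L-\max^{(k)}L$, $y_i(\boldsymbol a)=1$ iff $i\in I$ and $o_i>\max^{(k+1)}L-\max^{(k)}L$. Its objective is $\mathrm{OBJ}(\mathcal M_I^F)=\mathbb E_{\boldsymbol a\sim G}[\max^{(k)}L]$. The G-FIX mechanism $\mathcal M^F$ runs the $\mathcal M^F_I$ with the highest objective among all $I\subseteq[n]$ with $|I|\le k$, so $\mathrm{OBJ}(\mathcal M^F)=\max_{I\subseteq[n],|I|\le k}\mathrm{OBJ}(\mathcal M^F_I)$. *)

theory Defs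
  imports "HOL-Probability.Probability"
begin

text \<open>Items are indexed by {..<n} = {0,...,n-1}. A profile of ad values is a function
  nat => real; the product distribution is PiM {..<n} G.\<close>

text \<open>Regular distribution (Myerson): absolutely continuous with a density that is
  positive on an interval support S, and with non-decreasing virtual value
  v - (1 - F v) / f v on S, where F is the CDF.\<close>
definition regular_dist :: "real measure \<Rightarrow> bool" where
  "regular_dist M \<longleftrightarrow> prob_space M \<and>
     (\<exists>f S. is_interval S \<and> f \<in> borel_measurable borel \<and> (\<forall>v\<in>S. 0 < f v) \<and>
        M = density lborel (\<lambda>v. ennreal (f v) * indicator S v) \<and>
        mono_on S (\<lambda>v. v - (1 - measure M {..v}) / f v))"

definition max_k :: "nat \<Rightarrow> real list \<Rightarrow> real" where
  "max_k k xs = sum_list (take k (rev (sort xs)))"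

text \<open>Feasible mechanisms: allocation rules x (ad) and y (organic), conditions (i)-(iv),
  plus measurability (needed for the expectation to be meaningful).\<close>
definition mechanism ::
  "nat \<Rightarrow> nat \<Rightarrow> (nat \<Rightarrow> real measure) \<Rightarrow> (nat \<Rightarrow> (nat \<Rightarrow> real) \<Rightarrow> bool)
     \<Rightarrow> (nat \<Rightarrow> (nat \<Rightarrow> real) \<Rightarrow> bool) \<Rightarrow> bool" where
  "mechanism n k G x y \<longleftrightarrow>
     (\<forall>a. (\<Sum>i<n. of_bool (x i a) + of_bool (y i a)) \<le> (k::nat)) \<and>
     (\<forall>a. \<forall>i<n. \<not> (x i a \<and> y i a)) \<and>
     (\<forall>a. \<forall>i<n. \<forall>v. y i (a(i := v)) = y i a) \<and>
     (\<forall>a. \<forall>i<n. \<forall>v w. v \<le> w \<longrightarrow> x i (a(i := v)) \<longrightarrow> x i (a(i := w))) \<and>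
     (\<forall>i<n. (\<lambda>a. x i a) \<in> measurable (PiM {..<n} G) (count_space UNIV) \<and>
            (\<lambda>a. y i a) \<in> measurable (PiM {..<n} G) (count_space UNIV))"

definition OBJ ::
  "nat \<Rightarrow> (nat \<Rightarrow> real measure) \<Rightarrow> (nat \<Rightarrow> real)
     \<Rightarrow> (nat \<Rightarrow> (nat \<Rightarrow> real) \<Rightarrow> bool) \<Rightarrow> (nat \<Rightarrow> (nat \<Rightarrow> real) \<Rightarrow> bool) \<Rightarrow> ennreal" where
  "OBJ n G ov x y =
     (\<integral>\<^sup>+ a. ennreal (\<Sum>i<n. a i * of_bool (x i a) + ov i * of_bool (y i a)) \<partial>(PiM {..<n} G))"

definition OBJ_fixI ::
  "nat \<Rightarrow> nat \<Rightarrow> (nat \<Rightarrow> real measure) \<Rightarrow> (nat \<Rightarrow> real) \<Rightarrow> nat set \<Rightarrow> ennreal" where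
  "OBJ_fixI n k G ov I =
     (\<integral>\<^sup>+ a. ennreal (max_k k (map (\<lambda>i. if i \<in> I then ov i else a i) [0..<n])) \<partial>(PiM {..<n} G))"

definition OBJ_gfix ::
  "nat \<Rightarrow> nat \<Rightarrow> (nat \<Rightarrow> real measure) \<Rightarrow> (nat \<Rightarrow> real) \<Rightarrow> ennreal" where
  "OBJ_gfix n k G ov = (SUP I\<in>{I. I \<subseteq> {..<n} \<and> card I \<le> k}. OBJ_fixI n k G ov I)"

end

theory Submission
  imports Defs
begin

lemma mk3: "max_k 2 [p,q,r] = p+q+r - min p (min q r)"
  unfolding max_k_def by (auto simp: min_def insort_is_Cons)

lemma sum3: "(\<Sum>i<(3::nat). f i) = f 0 + f 1 + (f 2 :: 'a::comm_monoid_add)"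
  by (simp add: eval_nat_numeral)

lemma map3: "map f [0..<3] = [f 0, f 1, f (2::nat)]"
  by (simp add: eval_nat_numeral upt_rec)

lemma mk3_avg: "(2/3) * (p+q+r) \<le> max_k 2 [p,q,r::real]"
  unfolding mk3 min_def by auto

lemma mk3_pairs: "p + q \<le> max_k 2 [p,q,r::real]" "p + r \<le> max_k 2 [p,q,r]" "q + r \<le> max_k 2 [p,q,r]"
  unfolding mk3 min_def by auto

theorem theorem2:
  fixes G :: "nat \<Rightarrow> real measure" and ov :: "nat \<Rightarrow> real"
    and x y :: "nat \<Rightarrow> (nat \<Rightarrow> real) \<Rightarrow> bool"
  assumes "\<forall>i<3. regular_dist (G i)"
    and "\<forall>i<3. AE v in G i. 0 \<le> v"
    and "\<forall>i<3. 0 \<le> ov i"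
    and "mechanism 3 2 G x y"
  shows "OBJ_gfix 3 2 G ov \<ge> ennreal ((4/5)^3) * OBJ 3 G ov x y"
proof -
  note reg = assms(1) and nonneg = assms(2) and ovpos = assms(3)
  note mech = assms(4)[unfolded mechanism_def]
  have pG: "prob_space (G i)" if "i < 3" for i
    using reg that unfolding regular_dist_def by blast
  define G' where "G' i = (if i < 3 then G i else return borel (0::real))" for i
  have pG': "prob_space (G' i)" for i
    using pG by (auto simp: G'_def intro: prob_space_return)
  interpret product_sigma_finite G'
    unfolding product_sigma_finite_def
    using pG' prob_space_imp_sigma_finite by blast
  have PiM_eq: "PiM {..<3} G = PiM {..<3} G'"
    by (rule PiM_cong) (auto simp: G'_def)
  define M where "M = PiM {..<3} G'"
  have pM: "prob_space M" unfolding M_def by (rule prob_space_PiM) (rule pG')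
  have pMJ: "prob_space (PiM J G')" for J by (rule prob_space_PiM) (rule pG')
  have ymeas: "y i \<in> measurable M (count_space UNIV)" if "i < 3" for i
    using mech that unfolding M_def PiM_eq by blast
  have ycong: "y i (a(i := v)) = y i a" if "i < 3" for i a v
    using mech that by blast
  have disj: "\<not> (x i a \<and> y i a)" if "i < 3" for i a
    using mech that by blast

  define E where "E i = (\<integral>\<^sup>+ v. ennreal v \<partial>G i)" for i
  define m where "m i = max (E i) (ennreal (ov i))" for i

  have marg_le: "integral\<^sup>N M f \<le> K"
    if i: "i < 3" and f: "f \<in> borel_measurable M"
      and K: "\<And>z. z \<in> space (PiM ({..<3}-{i}) G') \<Longrightarrow> (\<integral>\<^sup>+ v. f (z(i := v)) \<partial>G' i) \<le> K"
    for i f K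
  proof -
    have ins: "insert i ({..<3}-{i}) = {..<3::nat}" using i by auto
    have "integral\<^sup>N M f = integral\<^sup>N (PiM (insert i ({..<3}-{i})) G') f"
      unfolding M_def ins ..
    also have "\<dots> = (\<integral>\<^sup>+ z. (\<integral>\<^sup>+ v. f (z(i := v)) \<partial>G' i) \<partial>PiM ({..<3}-{i}) G')"
      by (rule product_nn_integral_insert) (use f i in \<open>simp_all add: M_def insert_absorb\<close>)
    also have "\<dots> \<le> (\<integral>\<^sup>+ z. K \<partial>PiM ({..<3}-{i}) G')"
      by (rule nn_integral_mono) (rule K)
    also have "\<dots> = K"
      using prob_space.emeasure_space_1[OF pMJ] by simp
    finally show ?thesis .
  qed
  have marg_eq: "integral\<^sup>N M f = K"
    if i: "i < 3" and f: "f \<in> borel_measurable M"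
      and K: "\<And>z. z \<in> space (PiM ({..<3}-{i}) G') \<Longrightarrow> (\<integral>\<^sup>+ v. f (z(i := v)) \<partial>G' i) = K"
    for i f K
  proof -
    have ins: "insert i ({..<3}-{i}) = {..<3::nat}" using i by auto
    have "integral\<^sup>N M f = integral\<^sup>N (PiM (insert i ({..<3}-{i})) G') f"
      unfolding M_def ins ..
    also have "\<dots> = (\<integral>\<^sup>+ z. (\<integral>\<^sup>+ v. f (z(i := v)) \<partial>G' i) \<partial>PiM ({..<3}-{i}) G')"
      by (rule product_nn_integral_insert) (use f i in \<open>simp_all add: M_def insert_absorb\<close>)
    also have "\<dots> = (\<integral>\<^sup>+ z. K \<partial>PiM ({..<3}-{i}) G')"
      by (rule nn_integral_cong) (rule K)
    also have "\<dots> = K"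
      using prob_space.emeasure_space_1[OF pMJ] by simp
    finally show ?thesis .
  qed

  have sG: "sets (G' i) = sets borel" for i
  proof (cases "i < 3")
    case True
    then obtain f S where "G i = density lborel (\<lambda>v. ennreal (f v) * indicator S v)"
      using reg unfolding regular_dist_def by blast
    then show ?thesis using True by (simp add: G'_def)
  qed (simp add: G'_def)
  have compmeas: "(\<lambda>a. a i) \<in> borel_measurable M" if "i < 3" for i
  proof -
    have "(\<lambda>a. a i) \<in> measurable M (G' i)"
      unfolding M_def using that by (intro measurable_component_singleton) auto
    then show ?thesis using measurable_cong_sets[OF refl sG] by blast
  qed

  define c where "c i a = (if y i a then ov i else max 0 (a i))" for i a
  have cmeas: "(\<lambda>a. ennreal (c i a)) \<in> borel_measurable M" if "i < 3" for i
    unfolding c_def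
    using ymeas[OF that] compmeas[OF that]
    by (intro measurable_compose[OF _ measurable_ennreal] measurable_If borel_measurable_max)
       (auto simp: Measurable.pred_def)
  have cbound: "(\<integral>\<^sup>+ a. ennreal (c i a) \<partial>M) \<le> m i" if i: "i < 3" for i
  proof (rule marg_le[OF i cmeas[OF i]])
    fix z
    have "(\<integral>\<^sup>+ v. ennreal (c i (z(i := v))) \<partial>G' i)
        = (\<integral>\<^sup>+ v. (if y i z then ennreal (ov i) else ennreal v) \<partial>G i)"
      unfolding G'_def using i by (simp, intro nn_integral_cong) (auto simp: c_def ycong[OF i] ennreal_max_0)
    also have "\<dots> = (if y i z then ennreal (ov i) else E i)"
      using prob_space.emeasure_space_1[OF pG[OF i]] by (auto simp: E_def)
    also have "\<dots> \<le> m i" by (auto simp: m_def)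
    finally show "(\<integral>\<^sup>+ v. ennreal (c i (z(i := v))) \<partial>G' i) \<le> m i" .
  qed

  have step1: "OBJ 3 G ov x y \<le> (\<Sum>i<3. m i)"
  proof -
    have "OBJ 3 G ov x y \<le> (\<integral>\<^sup>+ a. (\<Sum>i<3. ennreal (c i a)) \<partial>M)"
      unfolding OBJ_def PiM_eq M_def[symmetric]
    proof (rule nn_integral_mono)
      fix a
      have "(\<Sum>i<3. a i * of_bool (x i a) + ov i * of_bool (y i a)) \<le> (\<Sum>i<3. c i a)"
      proof (rule sum_mono)
        fix i assume "i \<in> {..<(3::nat)}"
        then have i: "i < 3" by auto
        show "a i * of_bool (x i a) + ov i * of_bool (y i a) \<le> c i a"
          using disj[OF i, of a] by (auto simp: c_def)
      qed
      then show "ennreal (\<Sum>i<3. a i * of_bool (x i a) + ov i * of_bool (y i a)) \<le> (\<Sum>i<3. ennreal (c i a))"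
        using ovpos by (subst sum_ennreal) (auto simp: c_def intro: ennreal_leI)
    qed
    also have "\<dots> = (\<Sum>i<3. \<integral>\<^sup>+ a. ennreal (c i a) \<partial>M)"
      by (rule nn_integral_sum) (use cmeas in auto)
    also have "\<dots> \<le> (\<Sum>i<3. m i)"
      by (rule sum_mono) (use cbound in auto)
    finally show ?thesis .
  qed
  have Ecomp: "(\<integral>\<^sup>+ a. ennreal (a i) \<partial>M) = E i" if i: "i < 3" for i
  proof (rule marg_eq[OF i])
    show "(\<lambda>a. ennreal (a i)) \<in> borel_measurable M"
      using compmeas[OF i] by measurable
    fix z show "(\<integral>\<^sup>+ v. ennreal ((z(i := v)) i) \<partial>G' i) = E i"
      using i by (simp add: G'_def E_def)
  qed
  have AEi: "AE a in M. 0 \<le> a i" if i: "i < 3" for i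
  proof -
    have "G' i = G i" using i by (simp add: G'_def)
    then have "AE v in G' i. 0 \<le> v" using nonneg i by (simp only:)
    then show ?thesis unfolding M_def
      using AE_PiM_component[of "{..<3}" G' i "\<lambda>v. 0 \<le> v"] pG' i by auto
  qed
  define L where "L I i a = (if i \<in> I then ov i else a i)" for I i and a :: "nat \<Rightarrow> real"
  have fixI_eq: "OBJ_fixI 3 2 G ov I = (\<integral>\<^sup>+ a. ennreal (max_k 2 [L I 0 a, L I 1 a, L I 2 a]) \<partial>M)" for I
    unfolding OBJ_fixI_def PiM_eq M_def[symmetric] map3 L_def ..
  have Lcomp: "(\<integral>\<^sup>+ a. ennreal (L I i a) \<partial>M) = (if i \<in> I then ennreal (ov i) else E i)"
    if i: "i < 3" for I i
  proof (cases "i \<in> I")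
    case True
    then show ?thesis using prob_space.emeasure_space_1[OF pM] by (simp add: L_def)
  next
    case False
    then show ?thesis using Ecomp[OF i] by (simp add: L_def)
  qed
  have Lmeas: "(\<lambda>a. ennreal (L I i a)) \<in> borel_measurable M" if i: "i < 3" for I i
  proof (cases "i \<in> I")
    case True
    then show ?thesis by (simp add: L_def)
  next
    case False
    then show ?thesis using compmeas[OF i] by (simp add: L_def)
  qed
  have gfix_ge: "OBJ_fixI 3 2 G ov I \<le> OBJ_gfix 3 2 G ov" if "I \<subseteq> {..<3}" "card I \<le> 2" for I
    unfolding OBJ_gfix_def by (rule SUP_upper) (use that in auto)
  have pair: "ennreal (ov i + ov j) \<le> OBJ_gfix 3 2 G ov"
    if "i < 3" "j < 3" "i \<noteq> j" for i j
  proof -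
    have "ennreal (ov i + ov j) = (\<integral>\<^sup>+ a. ennreal (ov i + ov j) \<partial>M)"
      using prob_space.emeasure_space_1[OF pM] by simp
    also have "\<dots> \<le> OBJ_fixI 3 2 G ov {i, j}"
      unfolding fixI_eq
    proof (rule nn_integral_mono)
      fix a
      show "ennreal (ov i + ov j) \<le> ennreal (max_k 2 [L {i, j} 0 a, L {i, j} 1 a, L {i, j} 2 a])"
        using that unfolding mk3 L_def
        by (intro ennreal_leI) (auto simp: less_Suc_eq numeral_3_eq_3 numeral_2_eq_2 min_def)
    qed
    also have "\<dots> \<le> OBJ_gfix 3 2 G ov"
      by (rule gfix_ge) (use that in \<open>auto simp: card_insert_if\<close>)
    finally show ?thesis .
  qed
  have AE012: "AE a in M. 0 \<le> a 0" "AE a in M. 0 \<le> a 1" "AE a in M. 0 \<le> a 2"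
    using AEi by auto
  define J where "J = {i. i < 3 \<and> E i \<le> ennreal (ov i)}"
  have mJ: "m i = (if i \<in> J then ennreal (ov i) else E i)" if "i < 3" for i
    using that by (auto simp: m_def J_def max_def)
  have J3: "J \<subseteq> {..<3}" by (auto simp: J_def)
  have step2: "ennreal (2/3) * (\<Sum>i<3. m i) \<le> OBJ_gfix 3 2 G ov"
  proof (cases "card J \<le> 2")
    case True
    have "ennreal (2/3) * (\<Sum>i<3. m i) = ennreal (2/3) * (\<Sum>i<3. \<integral>\<^sup>+ a. ennreal (L J i a) \<partial>M)"
      by (intro arg_cong[where f="\<lambda>t. ennreal (2/3) * t"] sum.cong) (auto simp: mJ Lcomp)
    also have "\<dots> = (\<integral>\<^sup>+ a. ennreal (2/3) * (\<Sum>i<3. ennreal (L J i a)) \<partial>M)"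
      by (subst nn_integral_cmult) (auto simp: Lmeas intro!: borel_measurable_sum arg_cong[where f="\<lambda>t. ennreal (2/3) * t"] nn_integral_sum[symmetric])
    also have "\<dots> \<le> (\<integral>\<^sup>+ a. ennreal (max_k 2 [L J 0 a, L J 1 a, L J 2 a]) \<partial>M)"
    proof (rule nn_integral_mono_AE)
      show "AE a in M. ennreal (2/3) * (\<Sum>i<3. ennreal (L J i a)) \<le> ennreal (max_k 2 [L J 0 a, L J 1 a, L J 2 a])"
        using AE012
      proof eventually_elim
        case (elim a)
        have nn: "0 \<le> L J 0 a" "0 \<le> L J 1 a" "0 \<le> L J 2 a"
          using elim ovpos by (auto simp: L_def)
        have "ennreal (2/3) * (\<Sum>i<3. ennreal (L J i a)) = ennreal ((2/3) * (L J 0 a + L J 1 a + L J 2 a))"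
          using nn by (simp only: sum3 ennreal_plus[symmetric] ennreal_mult[symmetric] add_nonneg_nonneg)
        also have "\<dots> \<le> ennreal (max_k 2 [L J 0 a, L J 1 a, L J 2 a])"
          by (intro ennreal_leI mk3_avg)
        finally show ?case .
      qed
    qed
    also have "\<dots> \<le> OBJ_gfix 3 2 G ov"
      using gfix_ge[OF J3 True] unfolding fixI_eq .
    finally show ?thesis .
  next
    case False
    have "finite J" using J3 finite_subset by blast
    then have "card J \<le> card {..<3::nat}" using J3 card_mono by blast
    then have "card J = card {..<3::nat}" using False by simp
    then have "J = {..<3}" using J3 card_subset_eq by blast
    then have mo: "m i = ennreal (ov i)" if "i < 3" for i using mJ that by auto
    have s: "(\<Sum>i<3. m i) = ennreal (ov 0 + ov 1 + ov 2)"
      using ovpos by (simp add: sum3 mo ennreal_plus)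
    have "ennreal (2/3) * (\<Sum>i<3. m i) = ennreal ((2/3) * (ov 0 + ov 1 + ov 2))"
      unfolding s by (rule ennreal_mult[symmetric]) (use ovpos in auto)
    also have "\<dots> \<le> OBJ_gfix 3 2 G ov"
    proof -
      have o: "0 \<le> ov 0" "0 \<le> ov 1" "0 \<le> ov 2" using ovpos by auto
      consider "ov 2 \<le> ov 0 \<and> ov 2 \<le> ov 1" | "ov 1 \<le> ov 0 \<and> ov 1 \<le> ov 2" | "ov 0 \<le> ov 1 \<and> ov 0 \<le> ov 2"
        by linarith
      then show ?thesis
      proof cases
        case 1
        then show ?thesis by (intro order.trans[OF _ pair[of 0 1]] ennreal_leI) auto
      next
        case 2
        then show ?thesis by (intro order.trans[OF _ pair[of 0 2]] ennreal_leI) auto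
      next
        case 3
        then show ?thesis by (intro order.trans[OF _ pair[of 1 2]] ennreal_leI) auto
      qed
    qed
    finally show ?thesis .
  qed
  have "ennreal ((4/5)^3) * OBJ 3 G ov x y \<le> ennreal (2/3) * (\<Sum>i<3. m i)"
    by (intro mult_mono ennreal_leI step1) (auto simp: power3_eq_cube)
  then show ?thesis using step2 by simp
qed
end
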